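(* Let $(x,y)$ be a vertex of the polytope $P$. Then either $y$ is integral, or $y$ has exactly two noninteger components and for every $i\in F$ we have $x_i=0$ or $x_i=s_iy_i$.
   Context: Given a finite set $F$ of facilities with capacities $s_i\ge 0$, a demand $d$ and an integer $k$, let $P\subseteq\mathbb{R}^F\times\mathbb{R}^F$ be the set of $(x,y)$ satisfying $\sum_{i\in F}x_i=d$, $\sum_{i\in F}y_i=k$ (equality), $0\le x_i\le s_iy_i$ for all $i\in F$, and $0\le y_i\le 1$ for all $i\in F$. *)

theory Defs
  imports "HOL-Analysis.Analysis"
begin

text \<open>Facilities are the elements of a finite type 'i (so F = UNIV).
  The polytope P of pairs (x,y) with sum x = d, sum y = k,
  0 <= x_i <= s_i y_i, 0 <= y_i <= 1.\<close>

definition cap_polytope :: "real^'i::finite \<Rightarrow> real \<Rightarrow> int \<Rightarrow> ((real^'i) \<times> (real^'i)) set" where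
  "cap_polytope s d k =
     {xy. (\<Sum>i\<in>UNIV. (fst xy) $ i) = d \<and> (\<Sum>i\<in>UNIV. (snd xy) $ i) = of_int k \<and>
          (\<forall>i. 0 \<le> (fst xy) $ i \<and> (fst xy) $ i \<le> s $ i * (snd xy) $ i) \<and>
          (\<forall>i. 0 \<le> (snd xy) $ i \<and> (snd xy) $ i \<le> 1)}"

end

theory Submission
  imports Defs
begin

lemma ev_pos:
  fixes p q :: real
  assumes "0 < p"
  shows "eventually (\<lambda>e. 0 \<le> p + e*q) (nhds (0::real))"
proof -
  have "((\<lambda>e. p + e*q) \<longlongrightarrow> p + 0*q) (nhds (0::real))"
    by (intro tendsto_intros filterlim_ident)
  hence "((\<lambda>e. p + e*q) \<longlongrightarrow> p) (nhds (0::real))" by simp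
  from order_tendstoD(1)[OF this assms] show ?thesis
    by (rule eventually_mono) simp
qed

lemma coord_ev:
  fixes x y s a b :: real
  assumes "0\<le>x" "x \<le> s*y" "0\<le>y" "y\<le>1" "b\<noteq>0 \<Longrightarrow> 0<y \<and> y<1"
    "x=0 \<Longrightarrow> a=0" "x=s*y \<Longrightarrow> a=s*b"
  shows "eventually (\<lambda>e. 0 \<le> x+e*a \<and> x+e*a \<le> s*(y+e*b) \<and> 0 \<le> y+e*b \<and> y+e*b \<le> 1) (nhds 0)"
proof -
  have E1: "eventually (\<lambda>e. 0 \<le> x+e*a) (nhds 0)"
  proof (cases "x = 0")
    case True thus ?thesis using assms by simp
  next
    case False thus ?thesis using assms ev_pos[of x a] by simp
  qed
  have E2: "eventually (\<lambda>e. 0 \<le> (s*y - x)+e*(s*b - a)) (nhds 0)"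
  proof (cases "x = s*y")
    case True thus ?thesis using assms by simp
  next
    case False thus ?thesis using assms ev_pos[of "s*y-x" "s*b-a"] by simp
  qed
  have E3: "eventually (\<lambda>e. 0 \<le> y+e*b) (nhds 0)"
  proof (cases "b = 0")
    case True thus ?thesis using assms by simp
  next
    case False thus ?thesis using assms ev_pos[of y b] by simp
  qed
  have E4: "eventually (\<lambda>e. 0 \<le> (1-y)+e*(-b)) (nhds 0)"
  proof (cases "b = 0")
    case True thus ?thesis using assms by simp
  next
    case False thus ?thesis using assms ev_pos[of "1-y" "-b"] by simp
  qed
  show ?thesis
    using eventually_conj[OF E1 eventually_conj[OF E2 eventually_conj[OF E3 E4]]]
    by (rule eventually_mono) (simp add: algebra_simps)
qed

lemma perturb:
  fixes s x y a b :: "real^'i::finite"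
  assumes mem: "(x,y) \<in> cap_polytope s d k"
    and sa: "(\<Sum>i\<in>UNIV. a$i) = 0" and sb: "(\<Sum>i\<in>UNIV. b$i) = 0" and nz: "b \<noteq> 0"
    and co: "\<And>i. (b$i \<noteq> 0 \<longrightarrow> 0<y$i \<and> y$i<1) \<and> (x$i=0 \<longrightarrow> a$i=0) \<and> (x$i = s$i*y$i \<longrightarrow> a$i = s$i*b$i)"
  shows "\<not> (x,y) extreme_point_of cap_polytope s d k"
proof
  assume ext: "(x,y) extreme_point_of cap_polytope s d k"
  have M: "(\<Sum>i\<in>UNIV. x $ i) = d" "(\<Sum>i\<in>UNIV. y $ i) = of_int k"
    "\<And>i. 0 \<le> x $ i \<and> x $ i \<le> s $ i * y $ i" "\<And>i. 0 \<le> y $ i \<and> y $ i \<le> 1"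
    using mem by (auto simp: cap_polytope_def)
  have "\<forall>i. eventually (\<lambda>e. 0 \<le> x$i+e*a$i \<and> x$i+e*a$i \<le> s$i*(y$i+e*b$i) \<and> 0 \<le> y$i+e*b$i \<and> y$i+e*b$i \<le> 1) (nhds 0)"
    using coord_ev M co by blast
  hence "eventually (\<lambda>e. \<forall>i. 0 \<le> x$i+e*a$i \<and> x$i+e*a$i \<le> s$i*(y$i+e*b$i) \<and> 0 \<le> y$i+e*b$i \<and> y$i+e*b$i \<le> 1) (nhds 0)"
    by (intro eventually_all_finite) blast
  then obtain \<epsilon> :: real where ep: "\<epsilon> > 0" and
    H: "\<And>e. dist e 0 < \<epsilon> \<Longrightarrow> \<forall>i. 0 \<le> x$i+e*a$i \<and> x$i+e*a$i \<le> s$i*(y$i+e*b$i) \<and> 0 \<le> y$i+e*b$i \<and> y$i+e*b$i \<le> 1"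
    unfolding eventually_nhds_metric by blast
  have ME: "(x + e *\<^sub>R a, y + e *\<^sub>R b) \<in> cap_polytope s d k" if "\<bar>e\<bar> < \<epsilon>" for e
  proof -
    have "(\<Sum>i\<in>UNIV. (x + e *\<^sub>R a) $ i) = (\<Sum>i\<in>UNIV. x $ i) + e * (\<Sum>i\<in>UNIV. a$i)"
      by (simp add: sum.distrib sum_distrib_left)
    moreover have "(\<Sum>i\<in>UNIV. (y + e *\<^sub>R b) $ i) = (\<Sum>i\<in>UNIV. y $ i) + e * (\<Sum>i\<in>UNIV. b$i)"
      by (simp add: sum.distrib sum_distrib_left)
    moreover have "\<forall>i. 0 \<le> x$i+e*a$i \<and> x$i+e*a$i \<le> s$i*(y$i+e*b$i) \<and> 0 \<le> y$i+e*b$i \<and> y$i+e*b$i \<le> 1"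
      using H[of e] that by simp
    ultimately show ?thesis using M sa sb by (simp add: cap_polytope_def)
  qed
  define e where "e = \<epsilon>/2"
  have e: "\<bar>e\<bar> < \<epsilon>" "\<bar>-e\<bar> < \<epsilon>" "e \<noteq> 0" using ep by (auto simp: e_def)
  define p where "p = (x + e *\<^sub>R a, y + e *\<^sub>R b)"
  define q where "q = (x + (-e) *\<^sub>R a, y + (-e) *\<^sub>R b)"
  have pq: "p \<in> cap_polytope s d k" "q \<in> cap_polytope s d k"
    using ME e unfolding p_def q_def by blast+
  have "p \<noteq> q"
  proof
    assume "p = q"
    hence eq: "e *\<^sub>R b = (-e) *\<^sub>R b" by (simp add: p_def q_def)
    obtain i where "b$i \<noteq> 0" using nz by (auto simp: vec_eq_iff)
    have "(e *\<^sub>R b)$i = ((-e) *\<^sub>R b)$i" by (rule arg_cong[OF eq])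
    hence "e * b$i = - e * b$i" by simp
    thus False using e \<open>b$i \<noteq> 0\<close> by simp
  qed
  hence "midpoint p q \<in> open_segment p q" by simp
  moreover have "midpoint p q = (x,y)"
    by (simp add: midpoint_def p_def q_def vec_eq_iff field_simps)
  ultimately show False using ext pq unfolding extreme_point_of_def by metis
qed

lemma cfact:
  fixes xt yt st bt :: real
  assumes "0 < yt"
  shows "(xt = 0 \<longrightarrow> (if xt = st*yt then st else 0)*bt = 0) \<and> (xt = st*yt \<longrightarrow> (if xt = st*yt then st else 0)*bt = st*bt)"
  using assms by auto

lemma caseB:
  fixes s x y :: "real^'i::finite"
  assumes mem: "(x,y) \<in> cap_polytope s d k" and ij: "i \<noteq> j"
    and fi: "0<y$i" "y$i<1" and fj: "0<y$j" "y$j<1"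
    and fm: "x$m \<noteq> 0" "x$m \<noteq> s$m*y$m"
  shows "\<not> (x,y) extreme_point_of cap_polytope s d k"
proof -
  define c where "c = (\<lambda>t. if x$t = s$t*y$t then s$t else 0)"
  define b :: "real^'i" where "b = (\<chi> t. (if t=i then 1 else 0) - (if t=j then 1 else 0))"
  define a :: "real^'i" where "a = (\<chi> t. c t * b$t + (if t=m then c j - c i else 0))"
  have sb: "(\<Sum>t\<in>UNIV. b$t) = 0" by (simp add: b_def sum_subtractf)
  have "(\<Sum>t\<in>UNIV. c t * b$t) = (\<Sum>t\<in>UNIV. (if t=i then c i else 0) - (if t = j then c j else 0))"
    by (rule sum.cong) (auto simp: b_def)
  also have "\<dots> = c i - c j"
    using ij by (simp add: sum_subtractf)
  finally have "(\<Sum>t\<in>UNIV. c t * b$t) = c i - c j" .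
  hence sa: "(\<Sum>t\<in>UNIV. a$t) = 0" by (simp add: a_def sum.distrib)
  have nz: "b \<noteq> 0" proof assume "b = 0" hence "b$i = 0" by simp thus False using ij by (simp add: b_def) qed
  show ?thesis
  proof (rule perturb[OF mem sa sb nz])
    fix t
    show "(b$t \<noteq> 0 \<longrightarrow> 0<y$t \<and> y$t<1) \<and> (x$t=0 \<longrightarrow> a$t=0) \<and> (x$t = s$t*y$t \<longrightarrow> a$t = s$t*b$t)"
    proof (cases "t = m")
      case True
      thus ?thesis using fm fi fj by (auto simp: b_def)
    next
      case False
      hence at: "a$t = c t * b$t" by (simp add: a_def)
      show ?thesis
      proof (cases "t = i \<or> t = j")
        case True
        hence "0 < y$t \<and> y$t < 1" using fi fj by auto
        thus ?thesis using cfact[of "y$t" "x$t" "s$t" "b$t"] at by (auto simp: c_def)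
      next
        case False
        thus ?thesis using at by (simp add: b_def)
      qed
    qed
  qed
qed

lemma caseA:
  fixes s x y :: "real^'i::finite" and ta tb tk :: real
  assumes mem: "(x,y) \<in> cap_polytope s d k" and ij: "i \<noteq> j" "i \<noteq> l" "j \<noteq> l"
    and fi: "0<y$i" "y$i<1" and fj: "0<y$j" "y$j<1" and fl: "0<y$l" "y$l<1"
    and t: "ta + tb + tk = 0"
    and tc: "(if x$i = s$i*y$i then s$i else 0) * ta + (if x$j = s$j*y$j then s$j else 0) * tb
             + (if x$l = s$l*y$l then s$l else 0) * tk = 0"
    and tnz: "ta \<noteq> 0"
  shows "\<not> (x,y) extreme_point_of cap_polytope s d k"
proof -
  define c where "c = (\<lambda>t. if x$t = s$t*y$t then s$t else 0)"
  define b :: "real^'i" where "b = (\<chi> t. (if t=i then ta else 0) + (if t=j then tb else 0) + (if t=l then tk else 0))"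
  define a :: "real^'i" where "a = (\<chi> t. c t * b$t)"
  have sb: "(\<Sum>t\<in>UNIV. b$t) = 0" using t by (simp add: b_def sum.distrib)
  have "(\<lambda>t. a$t) = (\<lambda>t. (if t=i then c i * ta else 0) + (if t = j then c j * tb else 0) + (if t = l then c l * tk else 0))"
    using ij by (auto simp: a_def b_def fun_eq_iff)
  hence sa: "(\<Sum>t\<in>UNIV. a$t) = 0"
    using ij tc by (simp add: sum.distrib c_def)
  have nz: "b \<noteq> 0" proof assume "b = 0" hence "b$i = 0" by simp thus False using ij tnz by (simp add: b_def) qed
  show ?thesis
  proof (rule perturb[OF mem sa sb nz])
    fix t
    have at: "a$t = c t * b$t" by (simp add: a_def)
    show "(b$t \<noteq> 0 \<longrightarrow> 0<y$t \<and> y$t<1) \<and> (x$t=0 \<longrightarrow> a$t=0) \<and> (x$t = s$t*y$t \<longrightarrow> a$t = s$t*b$t)"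
    proof (cases "t = i \<or> t = j \<or> t = l")
      case True
      hence "0 < y$t \<and> y$t < 1" using fi fj fl by auto
      thus ?thesis using cfact[of "y$t" "x$t" "s$t" "b$t"] at by (auto simp: c_def)
    next
      case False
      thus ?thesis using at by (simp add: b_def)
    qed
  qed
qed

theorem mainTheorem9:
  fixes s x y :: "real^'i::finite" and d :: real and k :: int
  assumes "\<forall>i. s $ i \<ge> 0"
    and "(x, y) extreme_point_of cap_polytope s d k"
  shows "(\<forall>i. y $ i \<in> \<int>) \<or>
         (card {i. y $ i \<notin> \<int>} = 2 \<and> (\<forall>i. x $ i = 0 \<or> x $ i = s $ i * y $ i))"
proof -
  have mem: "(x,y) \<in> cap_polytope s d k" using assms(2) by (simp add: extreme_point_of_def)
  have M: "(\<Sum>i\<in>UNIV. y $ i) = of_int k" "\<And>i. 0 \<le> y $ i \<and> y $ i \<le> 1"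
    using mem by (auto simp: cap_polytope_def)
  define J where "J = {i. y$i \<notin> \<int>}"
  have frac: "0 < y$i \<and> y$i < 1" if "i \<in> J" for i
  proof -
    have "y$i \<noteq> 0" "y$i \<noteq> 1" using that by (auto simp: J_def)
    thus ?thesis using M(2)[of i] by linarith
  qed
  show ?thesis
  proof (cases "J = {}")
    case True thus ?thesis by (auto simp: J_def)
  next
    case False
    have c2: "card J \<ge> 2"
    proof (rule ccontr)
      assume "\<not> 2 \<le> card J"
      moreover have "card J \<noteq> 0" using False by simp
      ultimately have "card J = 1" by linarith
      then obtain i where Ji: "J = {i}" by (rule card_1_singletonE)
      have "(\<Sum>t\<in>UNIV. y$t) = y$i + (\<Sum>t\<in>UNIV-{i}. y$t)" by (simp add: sum.remove)
      moreover have "(\<Sum>t\<in>UNIV-{i}. y$t) \<in> \<int>"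
        by (rule Ints_sum) (use Ji in \<open>auto simp: J_def\<close>)
      ultimately have "y$i = of_int k - (\<Sum>t\<in>UNIV-{i}. y$t)" using M(1) by simp
      also have "\<dots> \<in> \<int>" using \<open>(\<Sum>t\<in>UNIV-{i}. y$t) \<in> \<int>\<close> by (intro Ints_diff) auto
      finally show False using Ji by (auto simp: J_def)
    qed
    define c where "c = (\<lambda>t. if x$t = s$t*y$t then s$t else 0)"
    show ?thesis
    proof (cases "card J \<ge> 3")
      case True
      then obtain T where "T \<subseteq> J" "card T = 3" by (meson obtain_subset_with_card_n)
      then obtain i j l where T: "T = {i,j,l}" "i \<noteq> j" "j \<noteq> l" "i \<noteq> l"
        by (auto simp: card_3_iff)
      have fr: "0 < y$i \<and> y$i < 1" "0 < y$j \<and> y$j < 1" "0 < y$l \<and> y$l < 1"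
        using frac T \<open>T \<subseteq> J\<close> by auto
      have "\<not> (x,y) extreme_point_of cap_polytope s d k"
      proof (cases "c i = c j")
        case True
        show ?thesis
          by (rule caseA[OF mem, of i j l 1 "-1" 0]) (use T fr True in \<open>auto simp: c_def\<close>)
      next
        case False
        have "c l * (c j - c i) + c i * (c l - c j) + c j * (c i - c l) = 0"
          by (simp add: algebra_simps)
        then show ?thesis
          by (intro caseA[OF mem, of l i j "c j - c i" "c l - c j" "c i - c l"])
             (use T fr False in \<open>auto simp: c_def\<close>)
      qed
      thus ?thesis using assms(2) by blast
    next
      case False
      hence "card J = 2" using c2 by linarith
      then obtain i j where ij: "J = {i,j}" "i \<noteq> j" by (auto simp: card_2_iff)
      have fr: "0 < y$i \<and> y$i < 1" "0 < y$j \<and> y$j < 1" using frac ij by auto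
      show ?thesis
      proof (rule ccontr)
        assume "\<not> ?thesis"
        then obtain m where "x$m \<noteq> 0" "x$m \<noteq> s$m*y$m"
          using \<open>card J = 2\<close> by (auto simp: J_def)
        with caseB[OF mem ij(2)] fr assms(2) show False by blast
      qed
    qed
  qed
qed

end
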